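(* In the drift-less setting, let $\rho_d=|\Psi\rangle\langle\Psi|$ be QLS but not DQLS, and suppose $\mathcal H_0=\mathrm{span}\{|\Psi\rangle,|\Phi_1\rangle\}$ with $|\Psi\rangle,|\Phi_1\rangle$ orthonormal. Then there exists a QL Hamiltonian $H_c$ such that $H_c|\Psi\rangle=0$ and $H_c|\Phi_1\rangle\notin\mathcal H_0$.
   Context: $\mathcal H=\bigotimes_{a=1}^n\mathcal H_a$ finite-dimensional with neighborhoods $\mathcal N_k\subsetneq\{1,\dots,n\}$. QL operator: $X_{\mathcal N_k}\otimes I_{\bar{\mathcal N}_k}$; QL Hamiltonian: sum of Hermitian QL operators. $\mathcal L(H,\{D_k\})(\rho)=-i[H,\rho]+\sum_k(D_k\rho D_k^\dagger-\frac12\{D_k^\dagger D_k,\rho\})$. GAS: $e^{\mathcal Lt}(\rho_0)\to\rho_d$ for every density operator $\rho_0$. QLS: there exist a QL Hamiltonian $H_c$ and QL $D_k$ with $D_k|\Psi\rangle=0$, $H_c|\Psi\rangle\in\mathbb R|\Psi\rangle$, making $\rho_d$ GAS for $\mathcal L(H_c,\{D_k\})$; DQLS: same with $H_c=0$. $\mathcal H_0=\bigcap_k\mathrm{supp}(\rho_{\mathcal N_k}\otimes I_{\bar{\mathcal N}_k})$, $\rho_{\mathcal N_k}=\mathrm{Tr}_{\bar{\mathcal N}_k}\rho_d$. *)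

theory Defs
  imports Complex_Main "HOL-Library.FuncSet"
begin

text \<open>
  Composite system of n subsystems (indexed 0..<n), subsystem a having
  dimension d a.  Computational basis states of the whole system are
  configurations x : {..<n} -> nat with x a < d a (extensional functions).
  Vectors are functions cfg => complex, operators cfg => cfg => complex
  (matrix entries w.r.t. the product basis); only entries on the basis
  configurations are meaningful.
\<close>

type_synonym cfg = "nat \<Rightarrow> nat"
type_synonym vec = "cfg \<Rightarrow> complex"
type_synonym op = "cfg \<Rightarrow> cfg \<Rightarrow> complex"

definition cfgs :: "nat \<Rightarrow> (nat \<Rightarrow> nat) \<Rightarrow> cfg set" where
  "cfgs n d = PiE {..<n} (\<lambda>a. {..<d a})"

definition cfgs_on :: "nat set \<Rightarrow> (nat \<Rightarrow> nat) \<Rightarrow> cfg set" where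
  "cfgs_on A d = PiE A (\<lambda>a. {..<d a})"

definition is_vec :: "nat \<Rightarrow> (nat \<Rightarrow> nat) \<Rightarrow> vec \<Rightarrow> bool" where
  "is_vec n d v \<longleftrightarrow> (\<forall>x. x \<notin> cfgs n d \<longrightarrow> v x = 0)"

definition inner :: "nat \<Rightarrow> (nat \<Rightarrow> nat) \<Rightarrow> vec \<Rightarrow> vec \<Rightarrow> complex" where
  "inner n d v w = (\<Sum>x\<in>cfgs n d. cnj (v x) * w x)"

definition apply_op :: "nat \<Rightarrow> (nat \<Rightarrow> nat) \<Rightarrow> op \<Rightarrow> vec \<Rightarrow> vec" where
  "apply_op n d X v = (\<lambda>x. if x \<in> cfgs n d then (\<Sum>y\<in>cfgs n d. X x y * v y) else 0)"

definition opmul :: "nat \<Rightarrow> (nat \<Rightarrow> nat) \<Rightarrow> op \<Rightarrow> op \<Rightarrow> op" where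
  "opmul n d X Y = (\<lambda>x z. if x \<in> cfgs n d \<and> z \<in> cfgs n d
       then (\<Sum>y\<in>cfgs n d. X x y * Y y z) else 0)"

definition adj :: "op \<Rightarrow> op" where
  "adj X = (\<lambda>x y. cnj (X y x))"

definition hermitian :: "nat \<Rightarrow> (nat \<Rightarrow> nat) \<Rightarrow> op \<Rightarrow> bool" where
  "hermitian n d X \<longleftrightarrow> (\<forall>x\<in>cfgs n d. \<forall>y\<in>cfgs n d. X x y = cnj (X y x))"

definition proj :: "vec \<Rightarrow> op" where
  "proj \<Psi> = (\<lambda>x y. \<Psi> x * cnj (\<Psi> y))"

definition density :: "nat \<Rightarrow> (nat \<Rightarrow> nat) \<Rightarrow> op \<Rightarrow> bool" where
  "density n d \<rho> \<longleftrightarrow> hermitian n d \<rho>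
     \<and> (\<forall>v. 0 \<le> Re (inner n d v (apply_op n d \<rho> v)))
     \<and> (\<Sum>x\<in>cfgs n d. \<rho> x x) = 1"

text \<open>Quasi-local operator w.r.t. neighborhood N: X = X_N \<otimes> I_{complement of N}.\<close>
definition QL_op :: "nat \<Rightarrow> (nat \<Rightarrow> nat) \<Rightarrow> nat set \<Rightarrow> op \<Rightarrow> bool" where
  "QL_op n d N X \<longleftrightarrow> (\<exists>Y :: op. \<forall>x\<in>cfgs n d. \<forall>y\<in>cfgs n d.
      X x y = (if (\<forall>a\<in>{..<n} - N. x a = y a)
               then Y (restrict x N) (restrict y N) else 0))"

definition QL :: "nat \<Rightarrow> (nat \<Rightarrow> nat) \<Rightarrow> (nat \<Rightarrow> nat set) \<Rightarrow> nat \<Rightarrow> op \<Rightarrow> bool" where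
  "QL n d Nb m X \<longleftrightarrow> (\<exists>k<m. QL_op n d (Nb k) X)"

definition QL_Ham :: "nat \<Rightarrow> (nat \<Rightarrow> nat) \<Rightarrow> (nat \<Rightarrow> nat set) \<Rightarrow> nat \<Rightarrow> op \<Rightarrow> bool" where
  "QL_Ham n d Nb m H \<longleftrightarrow> (\<exists>Hs :: op list.
      (\<forall>X\<in>set Hs. hermitian n d X \<and> QL n d Nb m X)
      \<and> (\<forall>x\<in>cfgs n d. \<forall>y\<in>cfgs n d. H x y = sum_list (map (\<lambda>X. X x y) Hs)))"

definition lindblad :: "nat \<Rightarrow> (nat \<Rightarrow> nat) \<Rightarrow> op \<Rightarrow> op list \<Rightarrow> op \<Rightarrow> op" where
  "lindblad n d H Ds \<rho> = (\<lambda>x y.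
      - \<i> * (opmul n d H \<rho> x y - opmul n d \<rho> H x y)
      + sum_list (map (\<lambda>D. opmul n d (opmul n d D \<rho>) (adj D) x y
            - (1/2) * (opmul n d (opmul n d (adj D) D) \<rho> x y
                       + opmul n d \<rho> (opmul n d (adj D) D) x y)) Ds))"

definition expL :: "(op \<Rightarrow> op) \<Rightarrow> real \<Rightarrow> op \<Rightarrow> op" where
  "expL L t \<rho> = (\<lambda>x y. (\<Sum>k. complex_of_real (t ^ k / fact k) * (L ^^ k) \<rho> x y))"

definition GAS :: "nat \<Rightarrow> (nat \<Rightarrow> nat) \<Rightarrow> (op \<Rightarrow> op) \<Rightarrow> op \<Rightarrow> bool" where
  "GAS n d L \<rho>d \<longleftrightarrow> (\<forall>\<rho>0. density n d \<rho>0 \<longrightarrow>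
      (\<forall>x\<in>cfgs n d. \<forall>y\<in>cfgs n d. ((\<lambda>t. expL L t \<rho>0 x y) \<longlongrightarrow> \<rho>d x y) at_top))"

definition QLS :: "nat \<Rightarrow> (nat \<Rightarrow> nat) \<Rightarrow> (nat \<Rightarrow> nat set) \<Rightarrow> nat \<Rightarrow> vec \<Rightarrow> bool" where
  "QLS n d Nb m \<Psi> \<longleftrightarrow> (\<exists>Hc Ds. QL_Ham n d Nb m Hc
      \<and> (\<forall>D\<in>set Ds. QL n d Nb m D \<and> apply_op n d D \<Psi> = (\<lambda>_. 0))
      \<and> (\<exists>r::real. apply_op n d Hc \<Psi> = (\<lambda>x. complex_of_real r * \<Psi> x))
      \<and> GAS n d (lindblad n d Hc Ds) (proj \<Psi>))"

definition DQLS :: "nat \<Rightarrow> (nat \<Rightarrow> nat) \<Rightarrow> (nat \<Rightarrow> nat set) \<Rightarrow> nat \<Rightarrow> vec \<Rightarrow> bool" where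
  "DQLS n d Nb m \<Psi> \<longleftrightarrow> (\<exists>Ds.
      (\<forall>D\<in>set Ds. QL n d Nb m D \<and> apply_op n d D \<Psi> = (\<lambda>_. 0))
      \<and> GAS n d (lindblad n d (\<lambda>_ _. 0) Ds) (proj \<Psi>))"

text \<open>rho_N \<otimes> I: partial trace over the complement of N, tensored with identity.\<close>
definition red_ext :: "nat \<Rightarrow> (nat \<Rightarrow> nat) \<Rightarrow> nat set \<Rightarrow> op \<Rightarrow> op" where
  "red_ext n d N \<rho> = (\<lambda>x y. if \<forall>a\<in>{..<n} - N. x a = y a then
      (\<Sum>w\<in>cfgs_on ({..<n} - N) d.
          \<rho> (\<lambda>a. if a \<in> N then x a else w a) (\<lambda>a. if a \<in> N then y a else w a))
      else 0)"

definition supp :: "nat \<Rightarrow> (nat \<Rightarrow> nat) \<Rightarrow> op \<Rightarrow> vec set" where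
  "supp n d X = {apply_op n d X v | v. is_vec n d v}"

definition H0 :: "nat \<Rightarrow> (nat \<Rightarrow> nat) \<Rightarrow> (nat \<Rightarrow> nat set) \<Rightarrow> nat \<Rightarrow> op \<Rightarrow> vec set" where
  "H0 n d Nb m \<rho> = {\<psi>. is_vec n d \<psi> \<and> (\<forall>k<m. \<psi> \<in> supp n d (red_ext n d (Nb k) \<rho>))}"

end

theory Submission
  imports Defs
begin


lemma fin_cfgs: "finite (cfgs n d)"
  unfolding cfgs_def by (rule finite_PiE) auto

lemma fiber_sum:
  assumes N: "N \<subseteq> {..<n}" and z: "z \<in> cfgs n d"
  shows "(\<Sum>x\<in>cfgs n d. if (\<forall>a\<in>{..<n}-N. x a = z a) then g (restrict x N) else 0)
         = (\<Sum>s\<in>cfgs_on N d. g s)"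
proof -
  let ?A = "{x\<in>cfgs n d. \<forall>a\<in>{..<n}-N. x a = z a}"
  have "(\<Sum>x\<in>cfgs n d. if (\<forall>a\<in>{..<n}-N. x a = z a) then g (restrict x N) else 0)
      = (\<Sum>x\<in>?A. g (restrict x N))"
    using sum.inter_filter[OF fin_cfgs, symmetric] by simp
  also have "bij_betw (\<lambda>x. restrict x N) ?A (cfgs_on N d)"
  proof (rule bij_betw_byWitness[where f'="\<lambda>s a. if a \<in> N then s a else z a"])
    show "\<forall>x\<in>?A. (\<lambda>s a. if a \<in> N then s a else z a) (restrict x N) = x"
    proof
      fix x assume x: "x \<in> ?A"
      show "(\<lambda>s a. if a \<in> N then s a else z a) (restrict x N) = x"
      proof
        fix a show "(if a \<in> N then restrict x N a else z a) = x a"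
        proof (cases "a \<in> N")
          case True then show ?thesis by simp
        next
          case F: False
          show ?thesis
          proof (cases "a < n")
            case True
            then have "x a = z a" using x F by simp
            then show ?thesis using F by simp
          next
            case False
            have xin: "x \<in> PiE {..<n} (\<lambda>a. {..<d a})" using x by (simp add: cfgs_def)
            have zin: "z \<in> PiE {..<n} (\<lambda>a. {..<d a})" using z by (simp add: cfgs_def)
            have "x a = undefined" using PiE_arb[OF xin] False by simp
            moreover have "z a = undefined" using PiE_arb[OF zin] False by simp
            ultimately show ?thesis using F by simp
          qed
        qed
      qed
    qed
    show "\<forall>s\<in>cfgs_on N d. restrict ((\<lambda>s a. if a \<in> N then s a else z a) s) N = s"
    proof
      fix s assume s: "s \<in> cfgs_on N d"
      have sin: "s \<in> PiE N (\<lambda>a. {..<d a})" using s by (simp add: cfgs_on_def)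
      show "restrict ((\<lambda>s a. if a \<in> N then s a else z a) s) N = s"
      proof
        fix a show "restrict ((\<lambda>s a. if a \<in> N then s a else z a) s) N a = s a"
          using PiE_arb[OF sin, of a] by (cases "a \<in> N") simp_all
      qed
    qed
    show "(\<lambda>x. restrict x N) ` ?A \<subseteq> cfgs_on N d"
      using N by (auto simp: cfgs_def cfgs_on_def PiE_iff)
    show "(\<lambda>s a. if a \<in> N then s a else z a) ` cfgs_on N d \<subseteq> ?A"
      using N z by (auto simp: cfgs_def cfgs_on_def PiE_iff extensional_def)
  qed
  hence "(\<Sum>x\<in>?A. g (restrict x N)) = (\<Sum>s\<in>cfgs_on N d. g s)" by (rule sum.reindex_bij_betw)
  finally show ?thesis .
qed



definition mg :: "nat set \<Rightarrow> cfg \<Rightarrow> cfg \<Rightarrow> cfg" where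
  "mg N s w = (\<lambda>a. if a \<in> N then s a else w a)"

lemma ball_eq_sym: "(\<forall>a\<in>A. f a = g a) \<longleftrightarrow> (\<forall>a\<in>A. g a = f a)"
  by auto

lemma mgr: "mg N (restrict x N) w = mg N x w"
  by (auto simp: mg_def fun_eq_iff)

lemma mg_in:
  assumes N: "N \<subseteq> {..<n}" and z: "z \<in> cfgs n d" and w: "w \<in> cfgs_on ({..<n} - N) d"
  shows "mg N z w \<in> cfgs n d"
proof -
  have zin: "z \<in> PiE {..<n} (\<lambda>a. {..<d a})" using z by (simp add: cfgs_def)
  have win: "w \<in> PiE ({..<n} - N) (\<lambda>a. {..<d a})" using w by (simp add: cfgs_on_def)
  have "mg N z w \<in> PiE {..<n} (\<lambda>a. {..<d a})"
  proof (rule PiE_I)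
    fix a assume a: "a \<in> {..<n}"
    show "mg N z w a \<in> {..<d a}"
    proof (cases "a \<in> N")
      case True then show ?thesis using PiE_mem[OF zin a] by (simp add: mg_def)
    next
      case False
      then have "a \<in> {..<n} - N" using a by simp
      then show ?thesis using PiE_mem[OF win] False by (simp add: mg_def)
    qed
  next
    fix a assume a: "a \<notin> {..<n}"
    then have "a \<notin> N" "a \<notin> {..<n} - N" using N by auto
    then show "mg N z w a = undefined" using PiE_arb[OF win] by (simp add: mg_def)
  qed
  then show ?thesis by (simp add: cfgs_def)
qed

lemma mg_restrict_eq:
  assumes x: "x \<in> cfgs n d" and w: "w \<in> cfgs_on ({..<n} - N) d"
    and h: "\<forall>a\<in>{..<n} - N. x a = w a"
  shows "mg N (restrict x N) w = x"
proof
  fix a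
  have xin: "x \<in> PiE {..<n} (\<lambda>a. {..<d a})" using x by (simp add: cfgs_def)
  have win: "w \<in> PiE ({..<n} - N) (\<lambda>a. {..<d a})" using w by (simp add: cfgs_on_def)
  show "mg N (restrict x N) w a = x a"
  proof (cases "a \<in> N")
    case True then show ?thesis by (simp add: mg_def)
  next
    case F: False
    show ?thesis
    proof (cases "a < n")
      case True
      then have "x a = w a" using h F by simp
      then show ?thesis using F by (simp add: mg_def)
    next
      case False
      have "x a = undefined" using PiE_arb[OF xin] False by simp
      moreover have "w a = undefined" using PiE_arb[OF win] False by simp
      ultimately show ?thesis using F by (simp add: mg_def)
    qed
  qed
qed

lemma pw2:
  fixes D :: op and \<Psi> :: vec
  assumes x: "x \<in> cfgs n d" and w: "w \<in> cfgs_on ({..<n} - N) d"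
    and Dx: "D (mg N z w) x = (if \<forall>a\<in>{..<n}-N. mg N z w a = x a
        then Y (restrict (mg N z w) N) (restrict x N) else 0)"
  shows "D (mg N z w) x * \<Psi> x = (if \<forall>a\<in>{..<n}-N. x a = mg N z w a
      then Y (restrict z N) (restrict x N) * \<Psi> (mg N (restrict x N) w) else 0)"
proof (cases "\<forall>a\<in>{..<n}-N. x a = mg N z w a")
  case True
  have c: "\<forall>a\<in>{..<n}-N. mg N z w a = x a" using ball_eq_sym[THEN iffD1, OF True] .
  have c2: "\<forall>a\<in>{..<n}-N. x a = w a" using True by (auto simp: mg_def)
  have rz: "restrict (mg N z w) N = restrict z N" by (auto simp: mg_def)
  have "D (mg N z w) x = Y (restrict z N) (restrict x N)"
    using Dx c rz by simp
  moreover have "\<Psi> x = \<Psi> (mg N (restrict x N) w)" using mg_restrict_eq[OF x w c2] by simp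
  ultimately show ?thesis using True by simp
next
  case False
  have c: "\<not> (\<forall>a\<in>{..<n}-N. mg N z w a = x a)"
  proof
    assume "\<forall>a\<in>{..<n}-N. mg N z w a = x a"
    then have "\<forall>a\<in>{..<n}-N. x a = mg N z w a" by (rule ball_eq_sym[THEN iffD1])
    with False show False by contradiction
  qed
  have "D (mg N z w) x = 0" using Dx c by simp
  then show ?thesis by (subst if_not_P[OF False]) simp
qed

lemma inner_zero:
  assumes N: "N \<subseteq> {..<n}"
    and DX: "\<forall>x\<in>cfgs n d. \<forall>y\<in>cfgs n d.
      D x y = (if (\<forall>a\<in>{..<n} - N. x a = y a) then Y (restrict x N) (restrict y N) else 0)"
    and DPsi: "apply_op n d D \<Psi> = (\<lambda>_. 0)"
    and z: "z \<in> cfgs n d" and w: "w \<in> cfgs_on ({..<n} - N) d"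
  shows "(\<Sum>s\<in>cfgs_on N d. Y (restrict z N) s * \<Psi> (mg N s w)) = 0"
proof -
  have z': "mg N z w \<in> cfgs n d" by (rule mg_in[OF N z w])
  have "0 = apply_op n d D \<Psi> (mg N z w)" using DPsi by simp
  also have "\<dots> = (\<Sum>x\<in>cfgs n d. D (mg N z w) x * \<Psi> x)" using z' by (simp add: apply_op_def)
  also have "\<dots> = (\<Sum>x\<in>cfgs n d. if \<forall>a\<in>{..<n}-N. x a = mg N z w a
      then Y (restrict z N) (restrict x N) * \<Psi> (mg N (restrict x N) w) else 0)"
    using pw2[OF _ w] DX z' by (intro sum.cong) auto
  also have "\<dots> = (\<Sum>s\<in>cfgs_on N d. Y (restrict z N) s * \<Psi> (mg N s w))"
    using fiber_sum[OF N z', of "\<lambda>s. Y (restrict z N) s * \<Psi> (mg N s w)"] by simp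
  finally show ?thesis by simp
qed

lemma red_ext_mg:
  "red_ext n d N (proj \<Psi>) x y = (if \<forall>a\<in>{..<n} - N. x a = y a then
      (\<Sum>w\<in>cfgs_on ({..<n} - N) d. \<Psi> (mg N x w) * cnj (\<Psi> (mg N y w))) else 0)"
  by (simp add: red_ext_def proj_def mg_def)

lemma pw1:
  assumes agr: "\<forall>a\<in>{..<n}-N. z a = y a"
    and Dx: "D z x = (if \<forall>a\<in>{..<n}-N. z a = x a
        then Y (restrict z N) (restrict x N) else 0)"
  shows "D z x * red_ext n d N (proj \<Psi>) x y = (if \<forall>a\<in>{..<n}-N. x a = z a
      then Y (restrict z N) (restrict x N) *
        (\<Sum>w\<in>cfgs_on ({..<n} - N) d. \<Psi> (mg N (restrict x N) w) * cnj (\<Psi> (mg N y w)))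
      else 0)"
proof (cases "\<forall>a\<in>{..<n}-N. x a = z a")
  case True
  have c: "\<forall>a\<in>{..<n}-N. z a = x a" using ball_eq_sym[THEN iffD1, OF True] .
  have c2: "\<forall>a\<in>{..<n}-N. x a = y a" using True agr by auto
  have "D z x = Y (restrict z N) (restrict x N)" using Dx c by simp
  moreover have "red_ext n d N (proj \<Psi>) x y =
      (\<Sum>w\<in>cfgs_on ({..<n} - N) d. \<Psi> (mg N (restrict x N) w) * cnj (\<Psi> (mg N y w)))"
    using c2 by (simp only: red_ext_mg mgr if_P)
  ultimately show ?thesis by (simp only: if_P[OF True])
next
  case False
  have c: "\<not> (\<forall>a\<in>{..<n}-N. z a = x a)"
  proof
    assume "\<forall>a\<in>{..<n}-N. z a = x a"
    then have "\<forall>a\<in>{..<n}-N. x a = z a" by (rule ball_eq_sym[THEN iffD1])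
    with False show False by contradiction
  qed
  have "D z x = 0" using Dx c by simp
  then show ?thesis by (simp only: if_not_P[OF False] mult_zero_left)
qed

lemma kill_key:
  assumes N: "N \<subseteq> {..<n}"
    and DX: "\<forall>x\<in>cfgs n d. \<forall>y\<in>cfgs n d.
      D x y = (if (\<forall>a\<in>{..<n} - N. x a = y a) then Y (restrict x N) (restrict y N) else 0)"
    and DPsi: "apply_op n d D \<Psi> = (\<lambda>_. 0)"
    and z: "z \<in> cfgs n d" and y: "y \<in> cfgs n d"
  shows "(\<Sum>x\<in>cfgs n d. D z x * red_ext n d N (proj \<Psi>) x y) = 0"
proof (cases "\<forall>a\<in>{..<n} - N. z a = y a")
  case False
  have "D z x * red_ext n d N (proj \<Psi>) x y = 0" if x: "x \<in> cfgs n d" for x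
  proof (cases "\<forall>a\<in>{..<n} - N. z a = x a")
    case True
    have "\<not> (\<forall>a\<in>{..<n} - N. x a = y a)" using True False by auto
    then show ?thesis by (simp only: red_ext_def if_not_P if_False mult_zero_right)
  next
    case F: False
    have "D z x = 0" using DX[rule_format, OF z x] F by (simp only: if_not_P if_False)
    then show ?thesis by simp
  qed
  then show ?thesis by (intro sum.neutral ballI) auto
next
  case True
  let ?C = "{..<n} - N"
  let ?g = "\<lambda>s. Y (restrict z N) s * (\<Sum>w\<in>cfgs_on ?C d. \<Psi> (mg N s w) * cnj (\<Psi> (mg N y w)))"
  have "(\<Sum>x\<in>cfgs n d. D z x * red_ext n d N (proj \<Psi>) x y)
      = (\<Sum>x\<in>cfgs n d. if (\<forall>a\<in>?C. x a = z a) then ?g (restrict x N) else 0)"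
    using pw1[OF True] DX z by (intro sum.cong) auto
  also have "\<dots> = (\<Sum>s\<in>cfgs_on N d. ?g s)"
    by (rule fiber_sum[OF N z])
  also have "\<dots> = (\<Sum>s\<in>cfgs_on N d. \<Sum>w\<in>cfgs_on ?C d. cnj (\<Psi> (mg N y w)) * (Y (restrict z N) s * \<Psi> (mg N s w)))"
    by (simp add: sum_distrib_left mult_ac)
  also have "\<dots> = (\<Sum>w\<in>cfgs_on ?C d. \<Sum>s\<in>cfgs_on N d. cnj (\<Psi> (mg N y w)) * (Y (restrict z N) s * \<Psi> (mg N s w)))"
    by (rule sum.swap)
  also have "\<dots> = (\<Sum>w\<in>cfgs_on ?C d. cnj (\<Psi> (mg N y w)) *
        (\<Sum>s\<in>cfgs_on N d. Y (restrict z N) s * \<Psi> (mg N s w)))"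
    by (simp add: sum_distrib_left)
  also have "\<dots> = 0"
  proof (rule sum.neutral, rule ballI)
    fix w assume w: "w \<in> cfgs_on ?C d"
    show "cnj (\<Psi> (mg N y w)) * (\<Sum>s\<in>cfgs_on N d. Y (restrict z N) s * \<Psi> (mg N s w)) = 0"
      using inner_zero[OF N DX DPsi z w] by (simp only: mult_zero_right)
  qed
  finally show ?thesis .
qed

lemma kill:
  assumes N: "N \<subseteq> {..<n}" and QL: "QL_op n d N D"
    and DPsi: "apply_op n d D \<Psi> = (\<lambda>_. 0)"
    and phi: "\<phi> \<in> supp n d (red_ext n d N (proj \<Psi>))"
  shows "apply_op n d D \<phi> = (\<lambda>_. 0)"
proof -
  obtain v where v: "\<phi> = apply_op n d (red_ext n d N (proj \<Psi>)) v"
    using phi by (auto simp: supp_def)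
  obtain Y where DX: "\<forall>x\<in>cfgs n d. \<forall>y\<in>cfgs n d.
      D x y = (if (\<forall>a\<in>{..<n} - N. x a = y a) then Y (restrict x N) (restrict y N) else 0)"
    using QL by (auto simp: QL_op_def)
  show ?thesis
  proof
    fix z
    show "apply_op n d D \<phi> z = 0"
    proof (cases "z \<in> cfgs n d")
      case True
      have "apply_op n d D \<phi> z = (\<Sum>x\<in>cfgs n d. D z x *
          (\<Sum>y\<in>cfgs n d. red_ext n d N (proj \<Psi>) x y * v y))"
        using True by (simp add: v apply_op_def)
      also have "\<dots> = (\<Sum>x\<in>cfgs n d. \<Sum>y\<in>cfgs n d. D z x * red_ext n d N (proj \<Psi>) x y * v y)"
        by (simp add: sum_distrib_left mult.assoc)
      also have "\<dots> = (\<Sum>y\<in>cfgs n d. \<Sum>x\<in>cfgs n d. D z x * red_ext n d N (proj \<Psi>) x y * v y)"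
        by (rule sum.swap)
      also have "\<dots> = (\<Sum>y\<in>cfgs n d. (\<Sum>x\<in>cfgs n d. D z x * red_ext n d N (proj \<Psi>) x y) * v y)"
        by (simp add: sum_distrib_right)
      also have "\<dots> = 0"
        using kill_key[OF N DX DPsi True] by simp
      finally show ?thesis .
    qed (simp add: apply_op_def)
  qed
qed



lemma apply_op_cong:
  assumes "\<forall>x\<in>cfgs n d. \<forall>y\<in>cfgs n d. X x y = X' x y"
  shows "apply_op n d X = apply_op n d X'"
  using assms by (auto simp: apply_op_def fun_eq_iff intro!: sum.cong)

lemma opmul_proj_right:
  "opmul n d X (proj \<Phi>) = (\<lambda>x y. if x \<in> cfgs n d \<and> y \<in> cfgs n d
     then apply_op n d X \<Phi> x * cnj (\<Phi> y) else 0)"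
  by (simp add: opmul_def apply_op_def proj_def fun_eq_iff sum_distrib_right mult.assoc)

lemma opmul_proj_left:
  "opmul n d (proj \<Phi>) X = (\<lambda>x y. if x \<in> cfgs n d \<and> y \<in> cfgs n d
     then \<Phi> x * cnj (apply_op n d (adj X) \<Phi> y) else 0)"
  by (simp add: opmul_def apply_op_def proj_def adj_def fun_eq_iff sum_distrib_left mult_ac)

lemma apply_op_opmul:
  "apply_op n d (opmul n d A B) v = apply_op n d A (apply_op n d B v)"
proof
  fix x
  show "apply_op n d (opmul n d A B) v x = apply_op n d A (apply_op n d B v) x"
  proof (cases "x \<in> cfgs n d")
    case True
    have "apply_op n d (opmul n d A B) v x = (\<Sum>y\<in>cfgs n d. \<Sum>z\<in>cfgs n d. A x z * B z y * v y)"
      using True by (simp add: apply_op_def opmul_def sum_distrib_right)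
    also have "\<dots> = (\<Sum>z\<in>cfgs n d. \<Sum>y\<in>cfgs n d. A x z * B z y * v y)"
      by (rule sum.swap)
    also have "\<dots> = apply_op n d A (apply_op n d B v) x"
      using True by (simp add: apply_op_def sum_distrib_left mult.assoc)
    finally show ?thesis .
  qed (simp add: apply_op_def)
qed

lemma apply_op_zero: "apply_op n d X (\<lambda>_. 0) = (\<lambda>_. 0)"
  by (simp add: apply_op_def fun_eq_iff)

lemma opmul_zero_left: "opmul n d (\<lambda>_ _. 0) X = (\<lambda>_ _. 0)"
  by (simp add: opmul_def fun_eq_iff)

lemma opmul_zero_right: "opmul n d X (\<lambda>_ _. 0) = (\<lambda>_ _. 0)"
  by (simp add: opmul_def fun_eq_iff)

lemma inner_cnj: "inner n d u v = cnj (inner n d v u)"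
  by (simp add: inner_def mult_ac)

lemma herm_swap:
  assumes "hermitian n d X" "x \<in> cfgs n d" "y \<in> cfgs n d"
  shows "cnj (X y x) = X x y"
proof -
  have h: "\<forall>x\<in>cfgs n d. \<forall>y\<in>cfgs n d. X x y = cnj (X y x)"
    using assms(1) unfolding hermitian_def .
  show ?thesis using h[rule_format, OF assms(2) assms(3)] by (rule sym)
qed

lemma herm_inner:
  assumes H: "hermitian n d X"
  shows "inner n d u (apply_op n d X v) = inner n d (apply_op n d X u) v"
proof -
  have "inner n d u (apply_op n d X v) = (\<Sum>x\<in>cfgs n d. \<Sum>y\<in>cfgs n d. cnj (u x) * X x y * v y)"
    by (simp add: inner_def apply_op_def sum_distrib_left mult.assoc)
  also have "\<dots> = (\<Sum>y\<in>cfgs n d. \<Sum>x\<in>cfgs n d. cnj (u x) * X x y * v y)"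
    by (rule sum.swap)
  also have "\<dots> = (\<Sum>y\<in>cfgs n d. cnj (apply_op n d X u y) * v y)"
  proof (rule sum.cong[OF refl])
    fix y assume y: "y \<in> cfgs n d"
    have "cnj (apply_op n d X u y) * v y = (\<Sum>x\<in>cfgs n d. cnj (X y x) * cnj (u x) * v y)"
      using y by (simp add: apply_op_def sum_distrib_right)
    also have "\<dots> = (\<Sum>x\<in>cfgs n d. cnj (u x) * X x y * v y)"
    proof (rule sum.cong[OF refl])
      fix x assume x: "x \<in> cfgs n d"
      show "cnj (X y x) * cnj (u x) * v y = cnj (u x) * X x y * v y"
        using herm_swap[OF H x y] by (simp only: mult.commute)
    qed
    finally show "(\<Sum>x\<in>cfgs n d. cnj (u x) * X x y * v y) = cnj (apply_op n d X u y) * v y" by (rule sym)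
  qed
  also have "\<dots> = inner n d (apply_op n d X u) v"
    by (simp add: inner_def)
  finally show ?thesis .
qed

lemma herm_adj_apply:
  assumes H: "hermitian n d X"
  shows "apply_op n d (adj X) = apply_op n d X"
proof (rule apply_op_cong, intro ballI)
  fix x y assume x: "x \<in> cfgs n d" and y: "y \<in> cfgs n d"
  show "adj X x y = X x y" unfolding adj_def by (rule herm_swap[OF H x y])
qed

lemma herm_opmul_adj: "hermitian n d (opmul n d (adj D) D)"
  by (auto simp: hermitian_def opmul_def adj_def mult_ac)

lemma cnj_mult_self: "cnj z * z = complex_of_real ((Re z)^2 + (Im z)^2)"
  using complex_mult_cnj[of z] by (simp add: mult.commute)

lemma density_proj:
  assumes "inner n d \<Phi> \<Phi> = 1"
  shows "density n d (proj \<Phi>)"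
proof -
  have "0 \<le> Re (inner n d v (apply_op n d (proj \<Phi>) v))" for v
  proof -
    let ?c = "\<Sum>y\<in>cfgs n d. cnj (\<Phi> y) * v y"
    have "inner n d v (apply_op n d (proj \<Phi>) v) = (\<Sum>x\<in>cfgs n d. cnj (v x) * (\<Phi> x * ?c))"
      by (simp add: inner_def apply_op_def proj_def sum_distrib_left mult.assoc)
    also have "\<dots> = (\<Sum>x\<in>cfgs n d. cnj (v x) * \<Phi> x) * ?c"
      by (simp add: sum_distrib_right mult.assoc)
    also have "(\<Sum>x\<in>cfgs n d. cnj (v x) * \<Phi> x) = cnj ?c" by (simp add: mult.commute)
    finally have h: "inner n d v (apply_op n d (proj \<Phi>) v) = cnj ?c * ?c" .
    have eq2: "cnj ?c * ?c = complex_of_real ((Re ?c)^2 + (Im ?c)^2)"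
      by (rule cnj_mult_self)
    have "Re (inner n d v (apply_op n d (proj \<Phi>) v)) = (Re ?c)^2 + (Im ?c)^2"
      by (simp only: h eq2 Re_complex_of_real)
    then show ?thesis by (simp only: add_nonneg_nonneg zero_le_power2)
  qed
  moreover have "(\<Sum>x\<in>cfgs n d. proj \<Phi> x x) = 1"
    using assms by (simp add: inner_def proj_def mult_ac)
  ultimately show ?thesis
    by (auto simp: density_def hermitian_def proj_def)
qed



lemma no_gas:
  assumes herm: "hermitian n d Hc"
    and HPhi: "apply_op n d Hc \<Phi> = (\<lambda>x. complex_of_real \<mu> * \<Phi> x)"
    and DPhi: "\<forall>D\<in>set Ds. apply_op n d D \<Phi> = (\<lambda>_. 0)"
    and nPhi: "inner n d \<Phi> \<Phi> = 1" and nPsi: "inner n d \<Psi> \<Psi> = 1"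
    and orth: "inner n d \<Psi> \<Phi> = 0"
  shows "\<not> GAS n d (lindblad n d Hc Ds) (proj \<Psi>)"
proof
  assume gas: "GAS n d (lindblad n d Hc Ds) (proj \<Psi>)"
  let ?L = "lindblad n d Hc Ds"
  let ?r = "proj \<Phi>"
  have c1: "opmul n d Hc ?r = opmul n d ?r Hc"
    by (simp add: opmul_proj_right opmul_proj_left herm_adj_apply[OF herm] HPhi fun_eq_iff)
  have c2: "opmul n d (opmul n d D ?r) (adj D) = (\<lambda>_ _. 0)
      \<and> opmul n d (opmul n d (adj D) D) ?r = (\<lambda>_ _. 0)
      \<and> opmul n d ?r (opmul n d (adj D) D) = (\<lambda>_ _. 0)" if D: "D \<in> set Ds" for D
  proof -
    have z: "apply_op n d D \<Phi> = (\<lambda>_. 0)" using DPhi D by auto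
    have "opmul n d D ?r = (\<lambda>_ _. 0)" by (simp add: opmul_proj_right z fun_eq_iff)
    moreover have "apply_op n d (opmul n d (adj D) D) \<Phi> = (\<lambda>_. 0)"
      by (simp add: apply_op_opmul z apply_op_zero)
    moreover have "apply_op n d (adj (opmul n d (adj D) D)) \<Phi> = (\<lambda>_. 0)"
      using herm_adj_apply[OF herm_opmul_adj[of n d D]] calculation(2) by simp
    ultimately show ?thesis
      by (simp add: opmul_zero_left opmul_proj_right opmul_proj_left fun_eq_iff)
  qed
  have L0: "?L ?r = (\<lambda>_ _. 0)"
  proof (rule ext)+
    fix x y
    have m: "map (\<lambda>D. opmul n d (opmul n d D ?r) (adj D) x y
            - (1/2) * (opmul n d (opmul n d (adj D) D) ?r x y
                       + opmul n d ?r (opmul n d (adj D) D) x y)) Ds = map (\<lambda>_. 0) Ds"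
      using c2 by (intro map_cong) auto
    have "?L ?r x y = - \<i> * (opmul n d Hc ?r x y - opmul n d ?r Hc x y) + sum_list (map (\<lambda>_. 0) Ds)"
      unfolding lindblad_def m ..
    then show "?L ?r x y = 0" using c1 by simp
  qed
  have Lz: "?L (\<lambda>_ _. 0) = (\<lambda>_ _. 0)"
    by (simp add: lindblad_def opmul_zero_left opmul_zero_right fun_eq_iff)
  have Lk: "(?L ^^ k) (\<lambda>_ _. 0) = (\<lambda>_ _. 0)" for k
    by (induction k) (simp_all add: Lz)
  have pow: "(?L ^^ Suc k) ?r = (\<lambda>_ _. 0)" for k
    by (simp only: funpow_Suc_right comp_def L0 Lk)
  have ex: "expL ?L t ?r x y = ?r x y" for t x y
  proof -
    have "(\<lambda>k. complex_of_real (t ^ k / fact k) * (?L ^^ k) ?r x y)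
        = (\<lambda>k. if k = 0 then ?r x y else 0)"
    proof
      fix k show "complex_of_real (t ^ k / fact k) * (?L ^^ k) ?r x y = (if k = 0 then ?r x y else 0)"
      proof (cases k)
        case (Suc j) then show ?thesis using pow[of j] by (simp del: funpow.simps)
      qed simp
    qed
    moreover have "(\<lambda>k. if k = 0 then ?r x y else 0) sums ?r x y"
      using sums_single[of 0 "\<lambda>_. ?r x y"] by simp
    ultimately show ?thesis unfolding expL_def by (simp add: sums_unique[symmetric])
  qed
  have eq: "?r x y = proj \<Psi> x y" if "x \<in> cfgs n d" "y \<in> cfgs n d" for x y
  proof -
    have "((\<lambda>t. expL ?L t ?r x y) \<longlongrightarrow> proj \<Psi> x y) at_top"
      using gas density_proj[OF nPhi] that unfolding GAS_def by blast
    then have "((\<lambda>t::real. ?r x y) \<longlongrightarrow> proj \<Psi> x y) at_top" by (simp add: ex)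
    then show ?thesis using tendsto_unique[OF trivial_limit_at_top_linorder tendsto_const] by blast
  qed
  have "\<Psi> x = 0" if x: "x \<in> cfgs n d" for x
  proof -
    have "(\<Sum>y\<in>cfgs n d. ?r x y * \<Psi> y) = (\<Sum>y\<in>cfgs n d. proj \<Psi> x y * \<Psi> y)"
      using eq x by (intro sum.cong) auto
    moreover have "(\<Sum>y\<in>cfgs n d. ?r x y * \<Psi> y) = \<Phi> x * cnj (inner n d \<Psi> \<Phi>)"
      by (simp add: proj_def inner_def sum_distrib_left mult_ac)
    moreover have "(\<Sum>y\<in>cfgs n d. proj \<Psi> x y * \<Psi> y) = \<Psi> x * inner n d \<Psi> \<Psi>"
      by (simp add: proj_def inner_def sum_distrib_left mult_ac)
    ultimately show ?thesis using orth nPsi by simp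
  qed
  then have "inner n d \<Psi> \<Psi> = 0" by (simp add: inner_def)
  then show False using nPsi by simp
qed

lemma cnj_sum_list: "cnj (sum_list (map f xs)) = sum_list (map (\<lambda>X. cnj (f X)) xs)"
  by (induction xs) simp_all

lemma QL_Ham_herm:
  assumes "QL_Ham n d Nb m H"
  shows "hermitian n d H"
proof -
  obtain Hs where hs: "\<forall>X\<in>set Hs. hermitian n d X \<and> QL n d Nb m X"
    and H: "\<forall>x\<in>cfgs n d. \<forall>y\<in>cfgs n d. H x y = sum_list (map (\<lambda>X. X x y) Hs)"
    using assms by (auto simp: QL_Ham_def)
  show ?thesis unfolding hermitian_def
  proof (intro ballI)
    fix x y assume x: "x \<in> cfgs n d" and y: "y \<in> cfgs n d"
    have m: "map (\<lambda>X. X x y) Hs = map (\<lambda>X. cnj (X y x)) Hs"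
    proof (rule map_cong[OF refl])
      fix X assume "X \<in> set Hs"
      then have "hermitian n d X" using hs by auto
      then show "X x y = cnj (X y x)" by (rule sym[OF herm_swap[OF _ x y]])
    qed
    have "H x y = sum_list (map (\<lambda>X. X x y) Hs)" using H x y by simp
    also have "\<dots> = sum_list (map (\<lambda>X. cnj (X y x)) Hs)" by (simp only: m)
    also have "\<dots> = cnj (sum_list (map (\<lambda>X. X y x) Hs))" by (simp only: cnj_sum_list)
    also have "\<dots> = cnj (H y x)" using H x y by simp
    finally show "H x y = cnj (H y x)" .
  qed
qed

lemma inner_lin: "inner n d u (\<lambda>x. a * v x + b * w x) = a * inner n d u v + b * inner n d u w"
  by (simp add: inner_def sum.distrib sum_distrib_left algebra_simps)

lemma inner_zero_left: "inner n d (\<lambda>_. 0) v = 0"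
  by (simp add: inner_def)

theorem corollary3:
  fixes n :: nat and d :: "nat \<Rightarrow> nat" and Nb :: "nat \<Rightarrow> nat set" and m :: nat
    and \<Psi> \<Phi>1 :: vec
  assumes nbhd: "\<forall>k<m. Nb k \<subset> {..<n}"
    and vecs: "is_vec n d \<Psi>" "is_vec n d \<Phi>1"
    and orthonormal: "inner n d \<Psi> \<Psi> = 1" "inner n d \<Phi>1 \<Phi>1 = 1" "inner n d \<Psi> \<Phi>1 = 0"
    and qls: "QLS n d Nb m \<Psi>"
    and not_dqls: "\<not> DQLS n d Nb m \<Psi>"
    and H0_span: "H0 n d Nb m (proj \<Psi>) = {(\<lambda>x. a * \<Psi> x + b * \<Phi>1 x) | a b. True}"
  shows "\<exists>Hc. QL_Ham n d Nb m Hc \<and> apply_op n d Hc \<Psi> = (\<lambda>_. 0)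
           \<and> apply_op n d Hc \<Phi>1 \<notin> H0 n d Nb m (proj \<Psi>)"
proof (rule ccontr)
  assume contra: "\<not> ?thesis"
  obtain Hc Ds r where Hc: "QL_Ham n d Nb m Hc"
    and Ds: "\<forall>D\<in>set Ds. QL n d Nb m D \<and> apply_op n d D \<Psi> = (\<lambda>_. 0)"
    and r: "apply_op n d Hc \<Psi> = (\<lambda>x. complex_of_real r * \<Psi> x)"
    and gas: "GAS n d (lindblad n d Hc Ds) (proj \<Psi>)"
    using qls unfolding QLS_def by blast
  obtain Hs where hs: "\<forall>X\<in>set Hs. hermitian n d X \<and> QL n d Nb m X"
    and HcHs: "\<forall>x\<in>cfgs n d. \<forall>y\<in>cfgs n d. Hc x y = sum_list (map (\<lambda>X. X x y) Hs)"
    using Hc by (auto simp: QL_Ham_def)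
  have hermHc: "hermitian n d Hc" by (rule QL_Ham_herm[OF Hc])
  have "(\<lambda>x. 0 * \<Psi> x + 1 * \<Phi>1 x) \<in> H0 n d Nb m (proj \<Psi>)"
    unfolding H0_span by (rule CollectI, rule exI[of _ 0], rule exI[of _ 1], simp)
  then have PhiH0: "\<Phi>1 \<in> H0 n d Nb m (proj \<Psi>)" by simp
  have DPhi: "\<forall>D\<in>set Ds. apply_op n d D \<Phi>1 = (\<lambda>_. 0)"
  proof
    fix D assume D: "D \<in> set Ds"
    then obtain k where k: "k < m" "QL_op n d (Nb k) D" using Ds by (auto simp: QL_def)
    have N: "Nb k \<subseteq> {..<n}" using nbhd k by auto
    have ph: "\<Phi>1 \<in> supp n d (red_ext n d (Nb k) (proj \<Psi>))"
      using PhiH0 k by (auto simp: H0_def)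
    have dp: "apply_op n d D \<Psi> = (\<lambda>_. 0)" using Ds D by auto
    show "apply_op n d D \<Phi>1 = (\<lambda>_. 0)"
      by (rule kill[OF N k(2) dp ph])
  qed
  have mpos: "m > 0"
  proof (rule ccontr)
    assume "\<not> m > 0"
    then have "m = 0" by simp
    then have "Hs = []" using hs by (cases Hs) (auto simp: QL_def)
    then have "apply_op n d Hc \<Phi>1 = (\<lambda>x. complex_of_real 0 * \<Phi>1 x)"
      using HcHs by (simp add: apply_op_def fun_eq_iff)
    from no_gas[OF hermHc this DPhi orthonormal(2) orthonormal(1) orthonormal(3)] gas
    show False by blast
  qed
  define Ir :: op where "Ir = (\<lambda>x y. if x = y then - complex_of_real r else 0)"
  define Hc' :: op where "Hc' = (\<lambda>x y. Hc x y + Ir x y)"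
  have IrH: "hermitian n d Ir" by (simp add: hermitian_def Ir_def)
  have IrQL: "QL n d Nb m Ir"
    unfolding QL_def
  proof (intro exI conjI)
    show "0 < m" by (rule mpos)
    show "QL_op n d (Nb 0) Ir"
      unfolding QL_op_def
    proof (intro exI ballI)
      fix x y assume x: "x \<in> cfgs n d" and y: "y \<in> cfgs n d"
      have "(x = y) \<longleftrightarrow> ((\<forall>a\<in>{..<n} - Nb 0. x a = y a) \<and> restrict x (Nb 0) = restrict y (Nb 0))"
      proof
        assume h: "(\<forall>a\<in>{..<n} - Nb 0. x a = y a) \<and> restrict x (Nb 0) = restrict y (Nb 0)"
        show "x = y"
        proof
          fix a
          show "x a = y a"
          proof (cases "a < n")
            case True
            have r: "restrict x (Nb 0) a = restrict y (Nb 0) a" using h by simp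
            show ?thesis
            proof (cases "a \<in> Nb 0")
              case True then show ?thesis using r by simp
            next
              case False then show ?thesis using h \<open>a < n\<close> by simp
            qed
          next
            case False
            have xin: "x \<in> PiE {..<n} (\<lambda>a. {..<d a})" using x by (simp add: cfgs_def)
            have yin: "y \<in> PiE {..<n} (\<lambda>a. {..<d a})" using y by (simp add: cfgs_def)
            have "x a = undefined" using PiE_arb[OF xin] False by simp
            moreover have "y a = undefined" using PiE_arb[OF yin] False by simp
            ultimately show ?thesis by simp
          qed
        qed
      qed simp
      then show "Ir x y = (if (\<forall>a\<in>{..<n} - Nb 0. x a = y a)
          then (\<lambda>s s'. if s = s' then - complex_of_real r else 0) (restrict x (Nb 0)) (restrict y (Nb 0)) else 0)"
        by (auto simp: Ir_def)
    qed
  qed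
  have Hc'QL: "QL_Ham n d Nb m Hc'"
    unfolding QL_Ham_def
  proof (intro exI conjI)
    show "\<forall>X\<in>set (Hs @ [Ir]). hermitian n d X \<and> QL n d Nb m X" using hs IrH IrQL by auto
    show "\<forall>x\<in>cfgs n d. \<forall>y\<in>cfgs n d. Hc' x y = sum_list (map (\<lambda>X. X x y) (Hs @ [Ir]))"
      using HcHs by (simp add: Hc'_def)
  qed
  have app': "apply_op n d Hc' v = (\<lambda>x. apply_op n d Hc v x - complex_of_real r * v x)"
    if v: "is_vec n d v" for v
  proof
    fix x show "apply_op n d Hc' v x = apply_op n d Hc v x - complex_of_real r * v x"
    proof (cases "x \<in> cfgs n d")
      case True
      have "(\<Sum>y\<in>cfgs n d. Ir x y * v y) = - complex_of_real r * v x"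
      proof -
        have "(\<Sum>y\<in>cfgs n d. Ir x y * v y) = (\<Sum>y\<in>cfgs n d. if x = y then - complex_of_real r * v y else 0)"
          by (rule sum.cong) (auto simp: Ir_def)
        also have "\<dots> = - complex_of_real r * v x"
          using True by (simp add: sum.delta sum.delta' fin_cfgs)
        finally show ?thesis .
      qed
      then show ?thesis using True
        by (simp add: apply_op_def Hc'_def distrib_right sum.distrib)
    next
      case False
      then show ?thesis using v by (simp add: apply_op_def is_vec_def)
    qed
  qed
  have Hc'Psi: "apply_op n d Hc' \<Psi> = (\<lambda>_. 0)"
    using app'[OF vecs(1)] r by simp
  have "apply_op n d Hc' \<Phi>1 \<in> H0 n d Nb m (proj \<Psi>)"
    using contra Hc'QL Hc'Psi by blast
  then obtain a b where ab: "apply_op n d Hc' \<Phi>1 = (\<lambda>x. a * \<Psi> x + b * \<Phi>1 x)"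
    unfolding H0_span by auto
  have hermHc': "hermitian n d Hc'" using QL_Ham_herm[OF Hc'QL] .
  have "inner n d \<Psi> (apply_op n d Hc' \<Phi>1) = inner n d (apply_op n d Hc' \<Psi>) \<Phi>1"
    by (rule herm_inner[OF hermHc'])
  then have a0: "a = 0"
    using orthonormal by (simp add: ab Hc'Psi inner_lin inner_zero_left)
  have b1: "inner n d \<Phi>1 (apply_op n d Hc' \<Phi>1) = b"
  proof -
    have "inner n d \<Phi>1 (apply_op n d Hc' \<Phi>1) = a * inner n d \<Phi>1 \<Psi> + b * inner n d \<Phi>1 \<Phi>1"
      by (simp only: ab inner_lin)
    then show ?thesis using a0 orthonormal(2) by simp
  qed
  have "inner n d \<Phi>1 (apply_op n d Hc' \<Phi>1) = inner n d (apply_op n d Hc' \<Phi>1) \<Phi>1"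
    by (rule herm_inner[OF hermHc'])
  also have "\<dots> = cnj (inner n d \<Phi>1 (apply_op n d Hc' \<Phi>1))" by (rule inner_cnj)
  finally have "b = cnj b" using b1 by simp
  then have bre: "b = complex_of_real (Re b)"
    by (simp add: complex_eq_iff)
  have "apply_op n d Hc \<Phi>1 = (\<lambda>x. complex_of_real (Re b + r) * \<Phi>1 x)"
  proof
    fix x
    have e1: "apply_op n d Hc' \<Phi>1 x = apply_op n d Hc \<Phi>1 x - complex_of_real r * \<Phi>1 x"
      using app'[OF vecs(2)] by simp
    have e2: "apply_op n d Hc' \<Phi>1 x = b * \<Phi>1 x"
      using ab a0 by simp
    have "apply_op n d Hc \<Phi>1 x - complex_of_real r * \<Phi>1 x = b * \<Phi>1 x"
      using e1 e2 by simp
    then show "apply_op n d Hc \<Phi>1 x = complex_of_real (Re b + r) * \<Phi>1 x"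
      by (subst (asm) bre) (simp add: algebra_simps)
  qed
  from no_gas[OF hermHc this DPhi orthonormal(2) orthonormal(1) orthonormal(3)] gas
  show False by blast
qed

end
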